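(* Let $G$ and $H$ be finite simple graphs, let $k\ge 0$ be an integer, and let $\delta_H$ be the minimum degree of $H$. If $S_G$ is a global defensive $k$-alliance in $G$, then $S_G\times V_H$ is a global defensive $(k\,n(H)+\delta_H)$-alliance in the lexicographic product $G[H]$. Consequently, $$\gamma^d_{k n(H)+\delta_H}(G[H])\le n(H)\,\gamma^d_k(G).$$
   Context: All graphs are finite and simple; $n(H)=|V_H|$. For $S\subseteq V_G$ and $v\in V_G$, $N_S(v)=\{u\in S: uv\in E_G\}$ and $\bar S=V_G\setminus S$. For an integer $k$, a nonempty $S\subseteq V_G$ is a global defensive $k$-alliance in $G$ if every vertex outside $S$ has a neighbor in $S$ and $|N_S(v)|\ge |N_{\bar S}(v)|+k$ for every $v\in S$; $\gamma^d_k(G)$ is the minimum size of such a set ($\infty$ if none exists). The lexicographic product $G[H]$ has vertex set $V_G\times V_H$, with $(g_1,h_1)\sim(g_2,h_2)$ iff $g_1g_2\in E_G$, or $g_1=g_2$ and $h_1h_2\in E_H$. *)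

theory Defs
  imports Main "HOL-Library.Extended_Nat"
begin

definition simple_graph :: "'a set \<Rightarrow> ('a \<Rightarrow> 'a \<Rightarrow> bool) \<Rightarrow> bool" where
  "simple_graph V E \<longleftrightarrow> finite V \<and> V \<noteq> {} \<and>
     (\<forall>u v. E u v \<longrightarrow> u \<in> V \<and> v \<in> V) \<and>
     (\<forall>u v. E u v \<longrightarrow> E v u) \<and> (\<forall>v. \<not> E v v)"

definition nbrs_in :: "('a \<Rightarrow> 'a \<Rightarrow> bool) \<Rightarrow> 'a set \<Rightarrow> 'a \<Rightarrow> 'a set" where
  "nbrs_in E S v = {u \<in> S. E u v}"

definition degree :: "'a set \<Rightarrow> ('a \<Rightarrow> 'a \<Rightarrow> bool) \<Rightarrow> 'a \<Rightarrow> nat" where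
  "degree V E v = card (nbrs_in E V v)"

definition min_degree :: "'a set \<Rightarrow> ('a \<Rightarrow> 'a \<Rightarrow> bool) \<Rightarrow> nat" where
  "min_degree V E = Min (degree V E ` V)"

definition global_def_alliance ::
  "'a set \<Rightarrow> ('a \<Rightarrow> 'a \<Rightarrow> bool) \<Rightarrow> int \<Rightarrow> 'a set \<Rightarrow> bool" where
  "global_def_alliance V E k S \<longleftrightarrow> S \<noteq> {} \<and> S \<subseteq> V \<and>
     (\<forall>v \<in> V - S. \<exists>u \<in> S. E u v) \<and>
     (\<forall>v \<in> S. int (card (nbrs_in E S v)) \<ge> int (card (nbrs_in E (V - S) v)) + k)"

text \<open>Global defensive k-alliance number; \<infinity> if no such set exists.\<close>
definition gamma_d :: "'a set \<Rightarrow> ('a \<Rightarrow> 'a \<Rightarrow> bool) \<Rightarrow> int \<Rightarrow> enat" where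
  "gamma_d V E k = (INF S \<in> {S. global_def_alliance V E k S}. enat (card S))"

definition lex_edge :: "'a set \<Rightarrow> ('a \<Rightarrow> 'a \<Rightarrow> bool) \<Rightarrow> 'b set \<Rightarrow> ('b \<Rightarrow> 'b \<Rightarrow> bool)
    \<Rightarrow> 'a \<times> 'b \<Rightarrow> 'a \<times> 'b \<Rightarrow> bool" where
  "lex_edge VG EG VH EH x y \<longleftrightarrow> x \<in> VG \<times> VH \<and> y \<in> VG \<times> VH \<and>
     (EG (fst x) (fst y) \<or> (fst x = fst y \<and> EH (snd x) (snd y)))"

end

theory Submission
  imports Defs
begin

lemma alliance_part:
  fixes VG :: "'a set" and EG :: "'a \<Rightarrow> 'a \<Rightarrow> bool"
    and VH :: "'b set" and EH :: "'b \<Rightarrow> 'b \<Rightarrow> bool"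
    and k :: int
  assumes G: "simple_graph VG EG" and H: "simple_graph VH EH"
    and A: "global_def_alliance VG EG k S"
  shows "global_def_alliance (VG \<times> VH) (lex_edge VG EG VH EH)
              (k * int (card VH) + int (min_degree VH EH)) (S \<times> VH)"
proof -
  have fG: "finite VG" and VGne: "VG \<noteq> {}" and eG: "\<And>u v. EG u v \<Longrightarrow> u \<in> VG \<and> v \<in> VG"
    and irG: "\<And>v. \<not> EG v v"
    using G unfolding simple_graph_def by auto
  have fH: "finite VH" and VHne: "VH \<noteq> {}" and eH: "\<And>u v. EH u v \<Longrightarrow> u \<in> VH \<and> v \<in> VH"
    using H unfolding simple_graph_def by auto
  have Sne: "S \<noteq> {}" and SV: "S \<subseteq> VG" and dom: "\<forall>v \<in> VG - S. \<exists>u \<in> S. EG u v"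
    and def: "\<forall>v \<in> S. int (card (nbrs_in EG S v)) \<ge> int (card (nbrs_in EG (VG - S) v)) + k"
    using A unfolding global_def_alliance_def by auto
  let ?E = "lex_edge VG EG VH EH"
  let ?n = "card VH"
  have "S \<times> VH \<noteq> {}" using Sne VHne by auto
  moreover have "S \<times> VH \<subseteq> VG \<times> VH" using SV by auto
  moreover have "\<forall>v \<in> VG \<times> VH - S \<times> VH. \<exists>u \<in> S \<times> VH. ?E u v"
  proof
    fix v assume v: "v \<in> VG \<times> VH - S \<times> VH"
    obtain g h where [simp]: "v = (g,h)" by force
    have "g \<in> VG - S" "h \<in> VH" using v by auto
    then obtain u where "u \<in> S" "EG u g" using dom by auto
    then show "\<exists>u \<in> S \<times> VH. ?E u v"
      using \<open>h \<in> VH\<close> SV \<open>g \<in> VG - S\<close>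
      by (intro bexI[of _ "(u,h)"]) (auto simp: lex_edge_def)
  qed
  moreover have "\<forall>v \<in> S \<times> VH. int (card (nbrs_in ?E (S \<times> VH) v)) \<ge>
      int (card (nbrs_in ?E (VG \<times> VH - S \<times> VH) v)) + (k * int ?n + int (min_degree VH EH))"
  proof
    fix v assume v: "v \<in> S \<times> VH"
    obtain g h where vv[simp]: "v = (g,h)" by force
    have g: "g \<in> S" "g \<in> VG" and h: "h \<in> VH" using v SV by auto
    have e1: "nbrs_in ?E (S \<times> VH) v = nbrs_in EG S g \<times> VH \<union> {g} \<times> nbrs_in EH VH h"
      using g h SV by (auto simp: nbrs_in_def lex_edge_def dest: eG eH)
    have disj: "(nbrs_in EG S g \<times> VH) \<inter> ({g} \<times> nbrs_in EH VH h) = {}"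
      using irG by (auto simp: nbrs_in_def)
    have fin1: "finite (nbrs_in EG S g)" using fG SV
      by (auto simp: nbrs_in_def intro: finite_subset)
    have fin2: "finite (nbrs_in EH VH h)" using fH by (auto simp: nbrs_in_def)
    have c1: "card (nbrs_in ?E (S \<times> VH) v) = card (nbrs_in EG S g) * ?n + degree VH EH h"
      unfolding e1 degree_def
      using fin1 fin2 fH disj by (simp add: card_Un_disjoint card_cartesian_product)
    have e2: "nbrs_in ?E (VG \<times> VH - S \<times> VH) v = nbrs_in EG (VG - S) g \<times> VH"
      using g h SV by (auto simp: nbrs_in_def lex_edge_def dest: eG eH)
    have c2: "card (nbrs_in ?E (VG \<times> VH - S \<times> VH) v) = card (nbrs_in EG (VG - S) g) * ?n"
      unfolding e2 by (simp add: card_cartesian_product)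
    have md: "min_degree VH EH \<le> degree VH EH h"
      unfolding min_degree_def using fH h by auto
    have a: "int (card (nbrs_in EG S g)) \<ge> int (card (nbrs_in EG (VG - S) g)) + k"
      using def g by auto
    have "int (card (nbrs_in EG S g)) * int ?n \<ge> (int (card (nbrs_in EG (VG - S) g)) + k) * int ?n"
      using a by (simp add: mult_right_mono)
    then show "int (card (nbrs_in ?E (S \<times> VH) v)) \<ge>
      int (card (nbrs_in ?E (VG \<times> VH - S \<times> VH) v)) + (k * int ?n + int (min_degree VH EH))"
      unfolding c1 c2 using md by (simp add: algebra_simps)
  qed
  ultimately show ?thesis unfolding global_def_alliance_def by blast
qed

theorem mainTheorem3:
  fixes VG :: "'a set" and EG :: "'a \<Rightarrow> 'a \<Rightarrow> bool"
    and VH :: "'b set" and EH :: "'b \<Rightarrow> 'b \<Rightarrow> bool"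
    and k :: int
  assumes "simple_graph VG EG" and "simple_graph VH EH" and "k \<ge> 0"
  shows "(\<forall>S. global_def_alliance VG EG k S \<longrightarrow>
            global_def_alliance (VG \<times> VH) (lex_edge VG EG VH EH)
              (k * int (card VH) + int (min_degree VH EH)) (S \<times> VH))
       \<and> gamma_d (VG \<times> VH) (lex_edge VG EG VH EH) (k * int (card VH) + int (min_degree VH EH))
           \<le> enat (card VH) * gamma_d VG EG k"
proof (intro conjI allI impI)
  fix S assume "global_def_alliance VG EG k S"
  then show "global_def_alliance (VG \<times> VH) (lex_edge VG EG VH EH)
              (k * int (card VH) + int (min_degree VH EH)) (S \<times> VH)"
    using alliance_part assms by blast
next
  have npos: "card VH > 0" using assms(2) unfolding simple_graph_def by auto
  let ?A = "(\<lambda>S. enat (card S)) ` {S. global_def_alliance VG EG k S}"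
  show "gamma_d (VG \<times> VH) (lex_edge VG EG VH EH) (k * int (card VH) + int (min_degree VH EH))
           \<le> enat (card VH) * gamma_d VG EG k"
  proof (cases "?A = {}")
    case True
    then have "gamma_d VG EG k = \<infinity>" unfolding gamma_d_def by (simp add: Inf_enat_def)
    then show ?thesis using npos by (simp add: enat_0 imult_is_infinity)
  next
    case False
    have "Inf ?A \<in> ?A" using False unfolding Inf_enat_def by (simp only: if_False) (metis (no_types, lifting) LeastI_ex ex_in_conv)
    then obtain S where S: "global_def_alliance VG EG k S" and eq: "gamma_d VG EG k = enat (card S)"
      unfolding gamma_d_def by auto
    have "global_def_alliance (VG \<times> VH) (lex_edge VG EG VH EH)
              (k * int (card VH) + int (min_degree VH EH)) (S \<times> VH)"
      using alliance_part assms S by blast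
    then have "gamma_d (VG \<times> VH) (lex_edge VG EG VH EH) (k * int (card VH) + int (min_degree VH EH))
       \<le> enat (card (S \<times> VH))" unfolding gamma_d_def by (auto intro: INF_lower)
    also have "card (S \<times> VH) = card VH * card S"
      by (simp add: card_cartesian_product)
    finally show ?thesis using eq by simp
  qed
qed

end
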